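(* Let $p>2$ and let $F$, $K$, $G$, $J$, $N$, $M_\gamma$ be as in the context. Suppose $\xi_p\in N(K^\times)$. Then for every $\gamma\in K^\times$ with $\dim_{\mathbb{F}_p}M_\gamma=2$ there exists $[\alpha]\in J$ with $\langle N([\alpha])\rangle = M_\gamma^G$.
   Context: Let $p$ be a prime and $F$ a field of characteristic different from $p$ containing a primitive $p$th root of unity $\xi_p$. Let $a\in F^\times\setminus F^{\times p}$ and $K=F(\sqrt[p]{a})$; $K^\times=K\setminus\{0\}$. Let $G=\mathrm{Gal}(K/F)=\langle\sigma\rangle$, where $\sigma(\sqrt[p]{a})/\sqrt[p]{a}=\xi_p$. Let $J=K^\times/K^{\times p}$, an $\mathbb{F}_p[G]$-module with elements $[\gamma]$. Let $N=1+\sigma+\dots+\sigma^{p-1}$, acting on $J$; $N(K^\times)$ is the norm group of $K/F$. For $\gamma\in K^\times$, $M_\gamma$ denotes the cyclic $\mathbb{F}_p[G]$-submodule of $J$ generated by $[\gamma]$. $\langle\cdot\rangle$ denotes $\mathbb{F}_p$-span and $V^G$ the $G$-fixed submodule. *)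

theory Defs
  imports "HOL-Computational_Algebra.Primes"
begin

text \<open>Elements of J = K^x / K^x^p are represented by elements of K^x; two nonzero
  elements represent the same class iff their quotient is a p-th power.
  Subsets of J are represented by the (class-saturated) sets of representatives.\<close>

definition same_cls :: "nat \<Rightarrow> 'k::field \<Rightarrow> 'k \<Rightarrow> bool" where
  "same_cls p x y \<longleftrightarrow> x \<noteq> 0 \<and> y \<noteq> 0 \<and> (\<exists>z. z \<noteq> 0 \<and> x = y * z ^ p)"

text \<open>F_p-span of a set of classes (written multiplicatively): all classes of finite
  products of representatives with exponents.\<close>
definition Jspan :: "nat \<Rightarrow> 'k::field set \<Rightarrow> 'k set" where
  "Jspan p S = {x. x \<noteq> 0 \<and> (\<exists>T e. finite T \<and> T \<subseteq> S \<and> same_cls p x (\<Prod>s\<in>T. s ^ e s))}"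

text \<open>F_p-linear independence of the classes of the elements of B
  (exponents taken in {0..p-1} as representatives of F_p).\<close>
definition Jindep :: "nat \<Rightarrow> 'k::field set \<Rightarrow> bool" where
  "Jindep p B \<longleftrightarrow> (\<forall>T e. finite T \<and> T \<subseteq> B \<and> (\<forall>s\<in>T. e s < p)
      \<and> same_cls p (\<Prod>s\<in>T. s ^ e s) 1 \<longrightarrow> (\<forall>s\<in>T. e s = 0))"

definition Jdim_eq :: "nat \<Rightarrow> 'k::field set \<Rightarrow> nat \<Rightarrow> bool" where
  "Jdim_eq p S d \<longleftrightarrow> (\<exists>B. finite B \<and> card B = d \<and> B \<subseteq> S \<and> 0 \<notin> B \<and> Jindep p B \<and> Jspan p B = S)"

definition Jnorm :: "nat \<Rightarrow> ('k::field \<Rightarrow> 'k) \<Rightarrow> 'k \<Rightarrow> 'k" where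
  "Jnorm p \<sigma> x = (\<Prod>i<p. (\<sigma> ^^ i) x)"

text \<open>M_gamma: cyclic F_p[G]-submodule generated by [gamma]; the element
  sum_i c_i sigma^i of F_p[G] sends [gamma] to [prod_i sigma^i(gamma)^(c_i)].\<close>
definition Mcyc :: "nat \<Rightarrow> ('k::field \<Rightarrow> 'k) \<Rightarrow> 'k \<Rightarrow> 'k set" where
  "Mcyc p \<sigma> \<gamma> = {x. x \<noteq> 0 \<and> (\<exists>c::nat \<Rightarrow> nat. same_cls p x (\<Prod>i<p. ((\<sigma> ^^ i) \<gamma>) ^ c i))}"

definition Jfixed :: "nat \<Rightarrow> ('k::field \<Rightarrow> 'k) \<Rightarrow> 'k set \<Rightarrow> 'k set" where
  "Jfixed p \<sigma> S = {x \<in> S. same_cls p (\<sigma> x) x}"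

end

theory Submission
  imports Defs "HOL-Library.FuncSet"
begin

locale L =
  fixes p :: nat and F :: "'k::field set" and \<xi> a \<delta> :: 'k and \<sigma> :: "'k \<Rightarrow> 'k"
  assumes p_prime: "prime p" and p_gt2: "p > 2"
    and F0: "0 \<in> F" and F1: "1 \<in> F" and Fadd: "\<And>x y. x \<in> F \<Longrightarrow> y \<in> F \<Longrightarrow> x + y \<in> F"
      and Fneg: "\<And>x. x \<in> F \<Longrightarrow> - x \<in> F" and Fmult: "\<And>x y. x \<in> F \<Longrightarrow> y \<in> F \<Longrightarrow> x * y \<in> F"
      and Finv: "\<And>x. x \<in> F \<Longrightarrow> inverse x \<in> F"
    and char: "of_nat p \<noteq> (0::'k)"
    and xi_F: "\<xi> \<in> F" and xi_root: "\<xi> ^ p = 1" and xi_prim: "\<And>k. 0 < k \<Longrightarrow> k < p \<Longrightarrow> \<xi> ^ k \<noteq> 1"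
    and a_F: "a \<in> F" and a_nz: "a \<noteq> 0" and a_not_pow: "\<not> (\<exists>b\<in>F. b ^ p = a)"
    and delta: "\<delta> ^ p = a"
    and K_gen: "\<And>x. \<exists>c. (\<forall>i. c i \<in> F) \<and> x = (\<Sum>i<p. c i * \<delta> ^ i)"
    and sigma_add: "\<And>x y. \<sigma> (x + y) = \<sigma> x + \<sigma> y"
    and sigma_mult: "\<And>x y. \<sigma> (x * y) = \<sigma> x * \<sigma> y"
    and sigma_bij: "bij \<sigma>"
    and sigma_F: "\<And>x. x \<in> F \<Longrightarrow> \<sigma> x = x"
    and sigma_delta: "\<sigma> \<delta> = \<xi> * \<delta>"
begin

lemma p_pos: "p > 0" using p_gt2 by simp
lemma p_ge2: "p \<ge> 2" using p_gt2 by simp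

lemma sig0: "\<sigma> 0 = 0" using sigma_F F0 by simp
lemma sig1: "\<sigma> 1 = 1" using sigma_F F1 by simp
lemma sig_nz: "x \<noteq> 0 \<Longrightarrow> \<sigma> x \<noteq> 0"
  using sigma_bij sig0 by (metis bij_def injD)

lemma sp_add: "(\<sigma>^^i) (x + y) = (\<sigma>^^i) x + (\<sigma>^^i) y"
  by (induction i) (auto simp: sigma_add)
lemma sp_mult: "(\<sigma>^^i) (x * y) = (\<sigma>^^i) x * (\<sigma>^^i) y"
  by (induction i) (auto simp: sigma_mult)
lemma sp_F: "x \<in> F \<Longrightarrow> (\<sigma>^^i) x = x"
  by (induction i) (auto simp: sigma_F)
lemma sp_nz: "x \<noteq> 0 \<Longrightarrow> (\<sigma>^^i) x \<noteq> 0"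
  by (induction i) (auto simp: sig_nz)
lemma sp0: "(\<sigma>^^i) 0 = 0" using sp_F F0 by simp
lemma sp1: "(\<sigma>^^i) 1 = 1" using sp_F F1 by simp
lemma sp_pow: "(\<sigma>^^i) (x ^ n) = ((\<sigma>^^i) x) ^ n"
  by (induction n) (auto simp: sp_mult sp1)
lemma sp_sum: "(\<sigma>^^i) (\<Sum>j\<in>A. f j) = (\<Sum>j\<in>A. (\<sigma>^^i) (f j))"
  by (induction A rule: infinite_finite_induct) (auto simp: sp0 sp_add)
lemma sp_prod: "(\<sigma>^^i) (\<Prod>j\<in>A. f j) = (\<Prod>j\<in>A. (\<sigma>^^i) (f j))"
  by (induction A rule: infinite_finite_induct) (auto simp: sp1 sp_mult)
lemma sp_inverse: "(\<sigma>^^i) (inverse x) = inverse ((\<sigma>^^i) x)"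
proof (cases "x = 0")
  case True thus ?thesis by (simp add: sp0)
next
  case False
  have "(\<sigma>^^i) x * (\<sigma>^^i) (inverse x) = 1" using False by (simp add: sp_mult[symmetric] sp1)
  thus ?thesis by (metis inverse_unique)
qed
lemma F_pow: "x \<in> F \<Longrightarrow> x ^ n \<in> F"
  by (induction n) (auto simp: F1 Fmult)
lemma sp_delta: "(\<sigma>^^i) \<delta> = \<xi>^i * \<delta>"
  by (induction i) (auto simp: sigma_mult sigma_delta sigma_F[OF F_pow[OF xi_F]])

lemma sp_Suc: "(\<sigma>^^Suc i) x = \<sigma> ((\<sigma>^^i) x)" by simp
lemma sp_Suc': "(\<sigma>^^Suc i) x = (\<sigma>^^i) (\<sigma> x)" by (simp add: funpow_swap1)

lemma sp_basis:
  assumes "\<forall>j. c j \<in> F"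
  shows "(\<sigma>^^i) (\<Sum>j<p. c j * \<delta>^j) = (\<Sum>j<p. c j * (\<xi>^j)^i * \<delta>^j)"
  using assms by (simp add: sp_sum sp_mult sp_pow sp_F sp_delta power_mult_distrib
      power_mult[symmetric] mult.commute mult.left_commute)

lemma sp_p: "(\<sigma>^^p) x = x"
proof -
  obtain c where c: "\<forall>j. c j \<in> F" "x = (\<Sum>j<p. c j * \<delta>^j)" using K_gen by blast
  have "(\<xi>^j)^p = 1" for j by (metis power_mult mult.commute power_one xi_root)
  thus ?thesis using sp_basis[OF c(1), of p] c(2) by simp
qed

lemma sp_mod: "(\<sigma>^^i) x = (\<sigma>^^(i mod p)) x"
proof -
  have "(\<sigma>^^(p * k + r)) x = (\<sigma>^^r) x" for k r
    by (induction k) (auto simp: funpow_add sp_p)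
  from this[of "i div p" "i mod p"] show ?thesis by simp
qed

lemma xi_nz: "\<xi> \<noteq> 0" using xi_root p_pos by (metis power_0_left zero_neq_one gr_implies_not0)

lemma xi_pow_mod: "\<xi>^n = \<xi>^(n mod p)"
proof -
  have "\<xi>^(p * (n div p)) * \<xi>^(n mod p) = \<xi>^(n mod p)" by (simp add: power_mult xi_root)
  thus ?thesis by (metis power_add mult_div_mod_eq)
qed

lemma xi_pow_eq1: "\<xi>^n = 1 \<longleftrightarrow> p dvd n"
proof
  assume "\<xi>^n = 1"
  hence "\<xi>^(n mod p) = 1" using xi_pow_mod by simp
  hence "\<not> (0 < n mod p)" using xi_prim[of "n mod p"] p_pos by auto
  thus "p dvd n" by auto
next
  assume "p dvd n" thus "\<xi>^n = 1" by (subst xi_pow_mod) simp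
qed

lemma sum_xi: "(\<Sum>i<p. (\<xi>^j)^i) = (if p dvd j then of_nat p else 0)"
proof (cases "p dvd j")
  case True hence "\<xi>^j = 1" using xi_pow_eq1 by simp
  thus ?thesis using True by simp
next
  case False
  hence "\<xi>^j \<noteq> 1" using xi_pow_eq1 by simp
  moreover have "(\<xi>^j)^p = 1" by (metis power_mult mult.commute power_one xi_root)
  ultimately show ?thesis using False by (simp add: geometric_sum)
qed

lemma fixed_F: assumes "\<sigma> x = x" shows "x \<in> F"
proof -
  obtain c where c: "\<forall>j. c j \<in> F" "x = (\<Sum>j<p. c j * \<delta>^j)" using K_gen by blast
  have fx: "(\<sigma>^^i) x = x" for i by (induction i) (auto simp: assms)
  have "(\<Sum>i<p. (\<sigma>^^i) x) = of_nat p * x" by (simp add: fx)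
  also have "(\<Sum>i<p. (\<sigma>^^i) x) = (\<Sum>i<p. \<Sum>j<p. c j * (\<xi>^j)^i * \<delta>^j)"
    using sp_basis[OF c(1)] c(2) by simp
  also have "\<dots> = (\<Sum>j<p. c j * \<delta>^j * (\<Sum>i<p. (\<xi>^j)^i))"
    by (subst sum.swap) (simp add: sum_distrib_left mult.commute mult.left_commute)
  also have "\<dots> = (\<Sum>j<p. if j = 0 then c 0 * of_nat p else 0)"
  proof (rule sum.cong)
    fix j assume "j \<in> {..<p}"
    hence "p dvd j \<longleftrightarrow> j = 0" by auto
    thus "c j * \<delta>^j * (\<Sum>i<p. (\<xi>^j)^i) = (if j = 0 then c 0 * of_nat p else 0)"
      by (auto simp: sum_xi)
  qed simp
  also have "\<dots> = c 0 * of_nat p" using p_pos by (simp add: sum.delta)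
  finally have "x = c 0" using char by (simp add: mult.commute)
  thus ?thesis using c(1) by simp
qed


lemma sum_shift: fixes f :: "nat \<Rightarrow> 'k" assumes "f p = f 0"
  shows "(\<Sum>i<p. f (Suc i)) = (\<Sum>i<p. f i)"
proof -
  have "f 0 + (\<Sum>i<p. f (Suc i)) = (\<Sum>i<p. f i) + f p"
    by (metis sum.lessThan_Suc sum.lessThan_Suc_shift)
  thus ?thesis using assms by (simp add: add.commute)
qed

lemma prod_shift: fixes f :: "nat \<Rightarrow> 'k" assumes "f p = f 0"
  shows "(\<Prod>i<p. f (Suc i)) = (\<Prod>i<p. f i)"
proof (cases "f 0 = 0")
  case False
  have "f 0 * (\<Prod>i<p. f (Suc i)) = (\<Prod>i<p. f i) * f p"
    by (metis prod.lessThan_Suc prod.lessThan_Suc_shift)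
  thus ?thesis using assms False by (simp add: mult.commute)
next
  case True
  have "p - 1 \<in> {..<p}" "Suc (p - 1) = p" using p_pos by auto
  hence "(\<Prod>i<p. f (Suc i)) = 0" using True assms
    by (metis (no_types, lifting) finite_lessThan prod_zero_iff)
  moreover have "(\<Prod>i<p. f i) = 0" using True p_pos by (metis finite_lessThan lessThan_iff prod_zero_iff)
  ultimately show ?thesis by metis
qed

abbreviation Nm :: "'k \<Rightarrow> 'k" where "Nm x \<equiv> Jnorm p \<sigma> x"

lemma sig_prod: "\<sigma> (\<Prod>j\<in>A. f j) = (\<Prod>j\<in>A. \<sigma> (f j))"
  using sp_prod[of 1] by simp
lemma sig_sum: "\<sigma> (\<Sum>j\<in>A. f j) = (\<Sum>j\<in>A. \<sigma> (f j))"
  using sp_sum[of 1] by simp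
lemma sig_pow: "\<sigma> (x ^ n) = (\<sigma> x) ^ n"
  using sp_pow[of 1] by simp
lemma sig_inverse: "\<sigma> (inverse x) = inverse (\<sigma> x)"
  using sp_inverse[of 1] by simp

lemma N_mult: "Nm (x * y) = Nm x * Nm y"
  by (simp add: Jnorm_def sp_mult prod.distrib)
lemma N_pow: "Nm (x ^ n) = Nm x ^ n"
  by (simp add: Jnorm_def sp_pow prod_power_distrib)
lemma N_inverse: "Nm (inverse x) = inverse (Nm x)"
  using prod_inversef[of "\<lambda>i. (\<sigma>^^i) x" "{..<p}"] by (simp add: Jnorm_def sp_inverse o_def)
lemma N_nz: "x \<noteq> 0 \<Longrightarrow> Nm x \<noteq> 0"
  by (simp add: Jnorm_def sp_nz)
lemma N_sigma: "\<sigma> (Nm x) = Nm x"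
proof -
  have "\<sigma> (Nm x) = (\<Prod>i<p. (\<sigma>^^Suc i) x)" by (simp add: Jnorm_def sig_prod)
  also have "\<dots> = Nm x" unfolding Jnorm_def by (rule prod_shift) (simp add: sp_p)
  finally show ?thesis .
qed
lemma N_of_sigma: "Nm (\<sigma> x) = Nm x"
proof -
  have "Nm (\<sigma> x) = (\<Prod>i<p. (\<sigma>^^Suc i) x)" unfolding Jnorm_def by (simp only: sp_Suc')
  also have "\<dots> = Nm x" unfolding Jnorm_def by (rule prod_shift) (simp add: sp_p)
  finally show ?thesis .
qed
lemma N_sp: "Nm ((\<sigma>^^j) x) = Nm x"
  by (induction j) (auto simp: N_of_sigma)
lemma N_F: "Nm x \<in> F" using fixed_F N_sigma by blast
lemma N_Fel: "f \<in> F \<Longrightarrow> Nm f = f ^ p"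
  by (simp add: Jnorm_def sp_F)

lemma prod_xi: "(\<Prod>i<p. \<xi>^i) = 1"
proof -
  have "(\<Prod>i<p. \<xi>^i) = \<xi>^(\<Sum>i<p. i)" by (simp add: power_sum)
  also have "(\<Sum>i<p. i) = p * (p - 1) div 2"
    using Sum_Ico_nat[of 0 p] by (simp add: atLeast0LessThan)
  also have "odd p" using p_prime p_gt2 by (metis prime_odd_nat)
  then obtain q where "p - 1 = 2 * q" by (metis dvd_def odd_two_times_div_two_nat p_pos dvd_triv_left)
  hence "p * (p - 1) div 2 = p * q" by simp
  finally show ?thesis by (simp add: power_mult xi_root)
qed

lemma delta_nz: "\<delta> \<noteq> 0" using delta a_nz p_pos by auto

lemma N_delta: "Nm \<delta> = a"
proof -
  have "Nm \<delta> = (\<Prod>i<p. \<xi>^i) * \<delta>^p" by (simp add: Jnorm_def sp_delta prod.distrib)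
  thus ?thesis using prod_xi delta by simp
qed

lemma unity: assumes "t ^ p = 1" shows "\<exists>m<p. t = \<xi>^m"
proof -
  define s where "s m = t * \<xi>^((p-1)*m)" for m
  have "(\<Sum>m<p. \<Sum>j<p. (s m)^j) = (\<Sum>j<p. t^j * (\<Sum>m<p. (\<xi>^((p-1)*j))^m))"
    by (subst sum.swap) (simp add: s_def sum_distrib_left power_mult_distrib power_mult[symmetric] mult.commute mult.left_commute)
  also have "\<dots> = (\<Sum>j<p. if j = 0 then of_nat p else 0)"
  proof (rule sum.cong)
    fix j assume j: "j \<in> {..<p}"
    have "p dvd (p - 1) * j \<longleftrightarrow> j = 0"
    proof
      assume "p dvd (p - 1) * j"
      hence "p dvd (p - 1) \<or> p dvd j" using p_prime prime_dvd_mult_iff by blast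
      moreover have "\<not> p dvd (p - 1)" using dvd_imp_le[of p "p - 1"] p_gt2 by auto
      ultimately show "j = 0" using j by auto
    qed simp
    thus "t^j * (\<Sum>m<p. (\<xi>^((p-1)*j))^m) = (if j = 0 then of_nat p else 0)"
      by (auto simp: sum_xi)
  qed simp
  also have "\<dots> = of_nat p" using p_pos by (simp add: sum.delta)
  finally have "(\<Sum>m<p. \<Sum>j<p. (s m)^j) \<noteq> 0" using char by simp
  then obtain m where m: "m < p" "(\<Sum>j<p. (s m)^j) \<noteq> 0"
    by (metis (no_types, lifting) lessThan_iff sum.neutral)
  have "(s m)^p = 1" using assms
    by (simp add: s_def power_mult_distrib power_mult[symmetric] mult.commute[of _ p]) (simp add: power_mult[of \<xi> p] xi_root)
  hence "s m = 1" using m(2) geometric_sum[of "s m" p] by auto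
  hence "t * \<xi>^((p-1)*m) * \<xi>^m = \<xi>^m" by (simp add: s_def)
  moreover have "\<xi>^((p-1)*m) * \<xi>^m = 1"
  proof -
    have "(p - 1) * m + m = p * m" using p_pos by (metis Suc_diff_1 mult_Suc add.commute)
    thus ?thesis by (metis power_add power_mult xi_root power_one)
  qed
  ultimately show ?thesis using m(1) by (metis mult.assoc mult.right_neutral)
qed

lemma H90: assumes "Nm w = 1" shows "\<exists>u. u \<noteq> 0 \<and> w * \<sigma> u = u"
proof -
  define W where "W i = (\<Prod>l<i. (\<sigma>^^l) w)" for i
  have WS: "W (Suc i) = w * \<sigma> (W i)" for i
    by (simp add: W_def prod.lessThan_Suc_shift sig_prod del: prod.lessThan_Suc)
  have W0: "W 0 = 1" by (simp add: W_def)
  have Wp: "W p = 1" using assms by (simp add: W_def Jnorm_def)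
  have "(\<Sum>j<p. \<Sum>i<p. W i * (\<xi>^i)^j) = (\<Sum>i<p. W i * (\<Sum>j<p. (\<xi>^i)^j))"
    by (subst sum.swap) (simp add: sum_distrib_left)
  also have "\<dots> = (\<Sum>i<p. if i = 0 then of_nat p else 0)"
  proof (rule sum.cong)
    fix i assume "i \<in> {..<p}"
    hence "p dvd i \<longleftrightarrow> i = 0" by auto
    thus "W i * (\<Sum>j<p. (\<xi>^i)^j) = (if i = 0 then of_nat p else 0)"
      by (auto simp: sum_xi W0)
  qed simp
  also have "\<dots> = of_nat p" using p_pos by (simp add: sum.delta)
  finally have "(\<Sum>j<p. \<Sum>i<p. W i * (\<xi>^i)^j) \<noteq> 0" using char by simp
  then obtain j where j: "(\<Sum>i<p. W i * (\<xi>^i)^j) \<noteq> 0"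
    by (metis (no_types, lifting) sum.neutral)
  define g where "g i = W i * (\<sigma>^^i) (\<delta>^j)" for i
  define u where "u = (\<Sum>i<p. g i)"
  have "u = (\<Sum>i<p. W i * (\<xi>^i)^j) * \<delta>^j"
    by (simp add: u_def g_def sp_pow sp_delta power_mult_distrib sum_distrib_right mult.assoc)
  hence "u \<noteq> 0" using j delta_nz by simp
  moreover have "w * \<sigma> u = u"
  proof -
    have "w * \<sigma> u = (\<Sum>i<p. g (Suc i))"
      by (simp add: u_def g_def sig_sum sum_distrib_left sigma_mult WS mult.assoc)
    also have "\<dots> = u" unfolding u_def by (rule sum_shift) (simp add: g_def Wp W0 sp_p)
    finally show ?thesis .
  qed
  ultimately show ?thesis by blast
qed


end

context L begin
lemma coprime_exp: assumes "\<not> p dvd n" shows "\<exists>x y. n * x = p * y + 1"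
proof -
  have "n \<noteq> 0" using assms by (metis dvd_0_right)
  have "coprime p n" using prime_imp_coprime[OF p_prime assms] .
  hence "gcd n p = 1" by (simp add: gcd.commute coprime_iff_gcd_eq_1)
  thus ?thesis using bezout_nat[OF \<open>n \<noteq> 0\<close>, of p] by metis
qed

lemma N_prod: "Nm (\<Prod>i\<in>A. f i) = (\<Prod>i\<in>A. Nm (f i))"
  unfolding Jnorm_def by (simp add: sp_prod) (rule prod.swap)

lemma z_exists: assumes "\<beta> \<noteq> 0" "Nm \<beta> = \<xi>"
  shows "\<exists>z. z \<noteq> 0 \<and> \<sigma> z = z * \<beta>^p \<and> Nm z = a"
proof -
  define h where "h i = ((\<sigma>^^i) \<beta>)^i" for i
  define v where "v = (\<Prod>i<p. h i)"
  have "\<sigma> v * Nm \<beta> = (\<Prod>i<p. ((\<sigma>^^Suc i) \<beta>)^i) * (\<Prod>i<p. (\<sigma>^^Suc i) \<beta>)"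
  proof -
    have "Nm \<beta> = (\<Prod>i<p. (\<sigma>^^Suc i) \<beta>)"
      unfolding Jnorm_def by (rule prod_shift[symmetric]) (simp add: sp_p)
    thus ?thesis by (simp add: v_def h_def sig_prod sig_pow)
  qed
  also have "\<dots> = (\<Prod>i<p. h (Suc i))" unfolding h_def prod.distrib[symmetric] by (simp add: mult.commute)
  also have "\<dots> = v * \<beta>^p"
  proof -
    have "h 0 * (\<Prod>i<p. h (Suc i)) = (\<Prod>i<p. h i) * h p"
      by (metis prod.lessThan_Suc prod.lessThan_Suc_shift)
    thus ?thesis by (simp add: h_def v_def sp_p)
  qed
  finally have sv: "\<sigma> v * \<xi> = v * \<beta>^p" using assms by simp
  have vnz: "v \<noteq> 0" unfolding v_def h_def using assms(1) by (simp add: sp_nz)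
  have Nv: "Nm v = 1"
  proof -
    have "Nm v = (\<Prod>i<p. Nm ((\<sigma>^^i) \<beta>) ^ i)" by (simp add: v_def h_def N_prod N_pow)
    also have "\<dots> = (\<Prod>i<p. \<xi>^i)" by (simp add: N_sp assms)
    finally show ?thesis using prod_xi by simp
  qed
  define z where "z = v * \<delta>"
  have "z \<noteq> 0" using vnz delta_nz by (simp add: z_def)
  moreover have "\<sigma> z = z * \<beta>^p" using sv by (simp add: z_def sigma_mult sigma_delta mult_ac)
  moreover have "Nm z = a" by (simp add: z_def N_mult Nv N_delta)
  ultimately show ?thesis by blast
qed

lemma norm_class:
  assumes b: "\<beta> \<noteq> 0" "Nm \<beta> = \<xi>" and c: "same_cls p (\<sigma> c) c" "Nm c = 1"
  shows "\<exists>\<alpha>. \<alpha> \<noteq> 0 \<and> same_cls p c (Nm \<alpha>)"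
proof -
  obtain w where w: "w \<noteq> 0" "\<sigma> c = c * w^p" "c \<noteq> 0" using c(1) unfolding same_cls_def by blast
  have "Nm c * Nm w ^ p = Nm c" using w(2) N_of_sigma[of c] by (simp add: N_mult N_pow)
  hence "Nm w ^ p = 1" using c(2) by simp
  then obtain k where k: "k < p" "Nm w = \<xi>^k" using unity by blast
  define w' where "w' = w * \<beta>^((p-1)*k)"
  have "Nm w' = \<xi>^k * \<xi>^((p-1)*k)" by (simp add: w'_def N_mult N_pow k b power_mult)
  also have "\<dots> = \<xi>^(p*k)" proof -
    have "k + (p-1)*k = p*k" using p_pos by (metis Suc_diff_1 mult_Suc)
    thus ?thesis by (metis power_add)
  qed
  also have "\<dots> = 1" by (simp add: power_mult xi_root)
  finally obtain u where u: "u \<noteq> 0" "w' * \<sigma> u = u" using H90 by blast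
  define c' where "c' = c * u^p"
  have c'nz: "c' \<noteq> 0" using u w by (simp add: c'_def)
  have sc': "\<sigma> c' * \<beta>^((p-1)*k*p) = c'"
  proof -
    have "\<sigma> c' * \<beta>^((p-1)*k*p) = c * (w' * \<sigma> u)^p"
      by (simp add: c'_def sigma_mult sig_pow w(2) w'_def power_mult_distrib power_mult[symmetric] mult_ac)
    thus ?thesis using u by (simp add: c'_def)
  qed
  have Nc': "Nm c' = Nm u ^ p" by (simp add: c'_def N_mult N_pow c(2))
  have Nunz: "Nm u \<noteq> 0" using u N_nz by blast
  show ?thesis
  proof (cases "k = 0")
    case True
    hence "\<sigma> c' = c'" using sc' by simp
    hence "c' \<in> F" using fixed_F by blast
    hence "c' ^ p = Nm u ^ p" using Nc' N_Fel by simp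
    hence "(c' * inverse (Nm u)) ^ p = 1" using Nunz by (simp add: power_mult_distrib power_inverse)
    then obtain m where m: "c' * inverse (Nm u) = \<xi>^m" using unity by blast
    hence "c' = \<xi>^m * Nm u" using Nunz by (simp add: field_simps)
    hence "c' = Nm (\<beta>^m * u)" by (simp add: N_mult N_pow b)
    moreover have "\<beta>^m * u \<noteq> 0" using b u by simp
    moreover have "same_cls p c c'"
      unfolding same_cls_def using w(3) c'nz u
      by (intro conjI exI[of _ "inverse u"]) (auto simp: c'_def power_inverse)
    ultimately show ?thesis by blast
  next
    case False
    obtain z where z: "z \<noteq> 0" "\<sigma> z = z * \<beta>^p" "Nm z = a" using z_exists b by blast
    define f where "f = c' * z^((p-1)*k)"
    have "\<sigma> f = \<sigma> c' * \<beta>^((p-1)*k*p) * z^((p-1)*k)"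
      by (simp add: f_def sigma_mult sig_pow z(2) power_mult_distrib power_mult[symmetric] mult_ac)
    hence "\<sigma> f = f" using sc' by (simp add: f_def)
    hence fF: "f \<in> F" using fixed_F by blast
    have "f ^ p = Nm u ^ p * a ^ ((p-1)*k)" using N_Fel[OF fF] by (simp add: f_def N_mult N_pow Nc' z(3))
    hence eq: "a ^ ((p-1)*k) = (f * inverse (Nm u)) ^ p" using Nunz
      by (simp add: power_mult_distrib power_inverse)
    define g where "g = f * inverse (Nm u)"
    have gF: "g \<in> F" using fF N_F Fmult Finv by (simp add: g_def)
    have "\<not> p dvd (p-1)*k"
    proof
      assume "p dvd (p-1)*k"
      hence "p dvd (p-1) \<or> p dvd k" using p_prime prime_dvd_mult_iff by blast
      moreover have "\<not> p dvd (p - 1)" using dvd_imp_le[of p "p - 1"] p_gt2 by auto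
      moreover have "\<not> p dvd k" using False k(1) dvd_imp_le[of p k] by auto
      ultimately show False by blast
    qed
    then obtain x y where xy: "(p-1)*k * x = p * y + 1" using coprime_exp by blast
    have "a ^ ((p-1)*k * x) = g ^ (p * x)" using eq by (simp add: g_def power_mult)
    hence aeq: "a * a ^ (p*y) = g ^ (p*x)" using xy by (simp add: power_add)
    have e1: "(g^x)^p = g^(p*x)" by (simp add: power_mult[symmetric] mult.commute)
    have e2: "(inverse (a^y))^p = inverse (a^(p*y))" by (simp add: power_inverse power_mult[symmetric] mult.commute)
    have e3: "a^(p*y) \<noteq> 0" using a_nz by simp
    have "(g ^ x * inverse (a ^ y)) ^ p = a * a ^ (p*y) * inverse (a^(p*y))"
      by (simp only: power_mult_distrib e1 e2 aeq)
    also have "\<dots> = a" using e3 by simp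
    finally have "a = (g ^ x * inverse (a ^ y)) ^ p" by simp
    moreover have "g ^ x * inverse (a ^ y) \<in> F" using gF a_F F_pow Fmult Finv by simp
    ultimately have "\<exists>b\<in>F. b ^ p = a" by (intro bexI[of _ "g ^ x * inverse (a ^ y)"]) simp_all
    thus ?thesis using a_not_pow by blast
  qed
qed

end

context L begin

abbreviation sc :: "'k \<Rightarrow> 'k \<Rightarrow> bool" where "sc x y \<equiv> same_cls p x y"

lemma sc_nz: "sc x y \<Longrightarrow> x \<noteq> 0 \<and> y \<noteq> 0" by (simp add: same_cls_def)
lemma sc_refl: "x \<noteq> 0 \<Longrightarrow> sc x x"
  unfolding same_cls_def by (intro conjI exI[of _ 1]) auto
lemma sc_sym: assumes "sc x y" shows "sc y x"
proof -
  obtain z where z: "x \<noteq> 0" "y \<noteq> 0" "z \<noteq> 0" "x = y * z^p" using assms by (auto simp: same_cls_def)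
  have "y = x * (inverse z)^p" using z by (simp add: power_inverse)
  thus ?thesis using z unfolding same_cls_def by (intro conjI exI[of _ "inverse z"]) auto
qed
lemma sc_trans: assumes "sc x y" "sc y w" shows "sc x w"
proof -
  obtain z where z: "x \<noteq> 0" "y \<noteq> 0" "z \<noteq> 0" "x = y * z^p" using assms(1) by (auto simp: same_cls_def)
  obtain u where u: "w \<noteq> 0" "u \<noteq> 0" "y = w * u^p" using assms(2) by (auto simp: same_cls_def)
  have "x = w * (u * z)^p" using z u by (simp add: power_mult_distrib mult.assoc)
  thus ?thesis using z u unfolding same_cls_def by (intro conjI exI[of _ "u * z"]) auto
qed
lemma sc_mult: assumes "sc x y" "sc x' y'" shows "sc (x * x') (y * y')"
proof -
  obtain z where z: "x \<noteq> 0" "y \<noteq> 0" "z \<noteq> 0" "x = y * z^p" using assms(1) by (auto simp: same_cls_def)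
  obtain u where u: "x' \<noteq> 0" "y' \<noteq> 0" "u \<noteq> 0" "x' = y' * u^p" using assms(2) by (auto simp: same_cls_def)
  have "x * x' = (y * y') * (z * u)^p" using z u by (simp add: power_mult_distrib mult_ac)
  thus ?thesis using z u unfolding same_cls_def by (intro conjI exI[of _ "z * u"]) auto
qed
lemma sc_pow: assumes "sc x y" shows "sc (x ^ n) (y ^ n)"
proof -
  obtain z where z: "x \<noteq> 0" "y \<noteq> 0" "z \<noteq> 0" "x = y * z^p" using assms(1) by (auto simp: same_cls_def)
  have "x ^ n = y ^ n * (z ^ n)^p" using z by (simp add: power_mult_distrib power_mult[symmetric] mult.commute)
  thus ?thesis using z unfolding same_cls_def by (intro conjI exI[of _ "z ^ n"]) auto
qed
lemma sc_ppow: "x \<noteq> 0 \<Longrightarrow> y \<noteq> 0 \<Longrightarrow> sc (x * y^p) x"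
  unfolding same_cls_def by (intro conjI exI[of _ y]) auto
lemma sc_1pow: "y \<noteq> 0 \<Longrightarrow> sc (y^p) 1"
  using sc_ppow[of 1 y] by simp
lemma sc_sigma: assumes "sc x y" shows "sc (\<sigma> x) (\<sigma> y)"
proof -
  obtain z where z: "x \<noteq> 0" "y \<noteq> 0" "z \<noteq> 0" "x = y * z^p" using assms(1) by (auto simp: same_cls_def)
  have "\<sigma> x = \<sigma> y * (\<sigma> z)^p" using z by (simp add: sigma_mult sig_pow)
  thus ?thesis using z sig_nz unfolding same_cls_def by (intro conjI exI[of _ "\<sigma> z"]) auto
qed
lemma sc_exp_mod: assumes "x \<noteq> 0" shows "sc (x ^ n) (x ^ (n mod p))"
proof -
  have "x ^ n = x ^ (n mod p) * (x ^ (n div p))^p"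
    by (metis mult.commute power_add power_mult mult_div_mod_eq)
  thus ?thesis using assms unfolding same_cls_def by (intro conjI exI[of _ "x ^ (n div p)"]) auto
qed
lemma sc_dvd_exp: "x \<noteq> 0 \<Longrightarrow> p dvd n \<Longrightarrow> sc (x ^ n) 1"
  using sc_exp_mod[of x n] by simp
lemma sc_root: assumes "sc (x ^ e) 1" "\<not> p dvd e" "x \<noteq> 0" shows "sc x 1"
proof -
  obtain a b where ab: "e * a = p * b + 1" using coprime_exp assms(2) by blast
  have "sc ((x ^ e) ^ a) 1" using sc_pow[OF assms(1), of a] by simp
  moreover have "(x ^ e) ^ a = x * (x ^ b) ^ p"
  proof -
    have "(x ^ e) ^ a = x ^ (p * b + 1)" using ab by (simp add: power_mult[symmetric])
    also have "\<dots> = x * (x ^ b) ^ p" by (simp add: power_add mult.commute[of p b] power_mult)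
    finally show ?thesis .
  qed
  ultimately have "sc (x * (x ^ b) ^ p) 1" by simp
  moreover have "sc x (x * (x ^ b) ^ p)" using sc_sym[OF sc_ppow[of x "x ^ b"]] assms(3) by simp
  ultimately show ?thesis using sc_trans by blast
qed
lemma sc_cancel: assumes "sc (y * x) (y * x')" "y \<noteq> 0" shows "sc x x'"
proof -
  obtain z where z: "y * x \<noteq> 0" "y * x' \<noteq> 0" "z \<noteq> 0" "y * x = y * x' * z^p" using assms(1) by (auto simp: same_cls_def)
  have "x = x' * z^p" using z assms(2) by (simp add: mult.assoc)
  thus ?thesis using z unfolding same_cls_def by (intro conjI exI[of _ z]) auto
qed
lemma sc_prod: assumes "finite A" "\<forall>i\<in>A. sc (f i) (g i)" shows "sc (\<Prod>i\<in>A. f i) (\<Prod>i\<in>A. g i)"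
  using assms by (induction A rule: finite_induct) (auto simp: sc_refl sc_mult)

definition Xf :: "'k \<Rightarrow> 'k" where "Xf y = \<sigma> y * y ^ (p - 1)"

lemma Xf_nz: "y \<noteq> 0 \<Longrightarrow> Xf y \<noteq> 0" by (simp add: Xf_def sig_nz)
lemma Xf_mult: "Xf (x * y) = Xf x * Xf y" by (simp add: Xf_def sigma_mult power_mult_distrib mult_ac)
lemma Xf_pow: "Xf (x ^ n) = (Xf x) ^ n"
proof -
  have "(x ^ n) ^ (p - 1) = (x ^ (p - 1)) ^ n" by (metis power_mult mult.commute)
  thus ?thesis by (simp add: Xf_def sig_pow power_mult_distrib)
qed
lemma Xf_1: "Xf 1 = 1" by (simp add: Xf_def sig1)
lemma Xf_sc: assumes "sc x y" shows "sc (Xf x) (Xf y)"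
  unfolding Xf_def by (rule sc_mult[OF sc_sigma[OF assms] sc_pow[OF assms]])
lemma Xf_sc1: "sc x 1 \<Longrightarrow> sc (Xf x) 1" using Xf_sc Xf_1 by metis
lemma Xfn_sc1: "sc x 1 \<Longrightarrow> sc ((Xf^^j) x) 1" by (induction j) (auto simp: Xf_sc1)
lemma Xfn_nz: "x \<noteq> 0 \<Longrightarrow> (Xf^^j) x \<noteq> 0" by (induction j) (auto simp: Xf_nz)
lemma Xf_fix: assumes "x \<noteq> 0" shows "sc (Xf x) 1 \<longleftrightarrow> sc (\<sigma> x) x"
proof -
  have "x^(p-1) * x = x^p" using p_pos by (metis Suc_diff_1 power_Suc2)
  hence e: "Xf x * x = \<sigma> x * x ^ p" by (simp add: Xf_def mult.assoc)
  have s1: "sc (Xf x * x) (\<sigma> x)" unfolding e by (rule sc_ppow[OF sig_nz[OF assms] assms])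
  show ?thesis
  proof
    assume "sc (Xf x) 1"
    hence "sc (Xf x * x) (1 * x)" using sc_mult sc_refl[OF assms] by blast
    thus "sc (\<sigma> x) x" using sc_trans[OF sc_sym[OF s1]] by simp
  next
    assume "sc (\<sigma> x) x"
    hence "sc (Xf x * x) (1 * x)" using sc_trans[OF s1] by simp
    thus "sc (Xf x) 1" using sc_cancel[of x "Xf x" 1] assms by (simp add: mult.commute)
  qed
qed

end

context L begin

lemma Xfn_formula:
  "(Xf^^k) y = (\<Prod>i\<le>k. ((\<sigma>^^i) y) ^ ((k choose i) * (p - 1) ^ (k - i)))"
proof (induction k)
  case 0 thus ?case by simp
next
  case (Suc k)
  define A where "A i = (\<sigma>^^i) y" for i
  define Q where "Q = (\<Prod>i\<le>k. A i ^ ((k choose i) * (p - 1) ^ (k - i)))"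
  have "(Xf^^Suc k) y = Xf Q" using Suc by (simp add: Q_def A_def)
  also have "\<dots> = (\<Prod>i\<le>k. A (Suc i) ^ ((k choose i) * (p - 1) ^ (k - i))) *
                   (\<Prod>i\<le>k. A i ^ ((k choose i) * (p - 1) ^ (Suc k - i)))"
  proof -
    have "\<sigma> Q = (\<Prod>i\<le>k. A (Suc i) ^ ((k choose i) * (p - 1) ^ (k - i)))"
      by (simp add: Q_def A_def sig_prod sig_pow)
    moreover have "Q ^ (p - 1) = (\<Prod>i\<le>k. A i ^ ((k choose i) * (p - 1) ^ (Suc k - i)))"
    proof -
      have "Q ^ (p - 1) = (\<Prod>i\<le>k. A i ^ ((k choose i) * (p - 1) ^ (k - i) * (p - 1)))"
        by (simp add: Q_def prod_power_distrib power_mult)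
      also have "\<dots> = (\<Prod>i\<le>k. A i ^ ((k choose i) * (p - 1) ^ (Suc k - i)))"
      proof (rule prod.cong)
        fix i assume "i \<in> {..k}"
        hence "Suc k - i = Suc (k - i)" by auto
        thus "A i ^ ((k choose i) * (p - 1) ^ (k - i) * (p - 1)) = A i ^ ((k choose i) * (p - 1) ^ (Suc k - i))"
          by (simp add: ac_simps)
      qed simp
      finally show ?thesis .
    qed
    ultimately show ?thesis by (simp add: Xf_def)
  qed
  also have "\<dots> = (\<Prod>i\<le>Suc k. A i ^ ((Suc k choose i) * (p - 1) ^ (Suc k - i)))"
  proof -
    define E1 where "E1 i = (k choose i) * (p - 1) ^ (Suc k - i)" for i
    define E2 where "E2 i = (if i = 0 then 0 else (k choose (i - 1)) * (p - 1) ^ (Suc k - i))" for i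
    have split: "(Suc k choose i) * (p - 1) ^ (Suc k - i) = E1 i + E2 i" for i
      by (cases i) (simp_all add: E1_def E2_def algebra_simps)
    have "(\<Prod>i\<le>Suc k. A i ^ ((Suc k choose i) * (p - 1) ^ (Suc k - i)))
        = (\<Prod>i\<le>Suc k. A i ^ E1 i * A i ^ E2 i)"
      by (rule prod.cong) (simp_all only: split power_add)
    also have "\<dots> = (\<Prod>i\<le>Suc k. A i ^ E1 i) * (\<Prod>i\<le>Suc k. A i ^ E2 i)"
      by (rule prod.distrib)
    also have "(\<Prod>i\<le>Suc k. A i ^ E1 i) = (\<Prod>i\<le>k. A i ^ ((k choose i) * (p - 1) ^ (Suc k - i)))"
      by (simp add: E1_def binomial_eq_0)
    also have "(\<Prod>i\<le>Suc k. A i ^ E2 i) = (\<Prod>i\<le>k. A (Suc i) ^ ((k choose i) * (p - 1) ^ (k - i)))"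
      by (simp add: E2_def prod.atMost_Suc_shift del: prod.atMost_Suc)
    finally show ?thesis by (simp add: mult.commute)
  qed
  finally show ?case by (simp add: A_def)
qed

lemma p_dvd_pow: "p dvd (p - 1) ^ p + 1"
proof -
  have "odd p" using p_prime p_gt2 by (metis prime_odd_nat)
  have i: "int ((p - 1) ^ p + 1) = (int p - 1) ^ p + 1" using p_pos by (simp add: of_nat_diff)
  have "(int p - 1) mod int p = (-1) mod int p" by (simp add: mod_diff_left_eq[symmetric])
  hence "(int p - 1) ^ p mod int p = (-1) ^ p mod int p" by (metis power_mod)
  hence "((int p - 1) ^ p + 1) mod int p = ((-1) ^ p + 1) mod int p" by (metis mod_add_left_eq)
  also have "\<dots> = 0" using \<open>odd p\<close> by simp
  finally have "int p dvd int ((p - 1) ^ p + 1)" unfolding i by (simp add: dvd_eq_mod_eq_0)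
  thus ?thesis by (simp only: of_nat_dvd_iff)
qed

lemma Xf_nil: assumes "y \<noteq> 0" shows "sc ((Xf^^p) y) 1"
proof -
  define A where "A i = (\<sigma>^^i) y" for i
  define f where "f i = A i ^ ((p choose i) * (p - 1) ^ (p - i))" for i
  obtain q where q: "p = Suc q" using p_pos by (metis Suc_pred)
  have Anz: "A i \<noteq> 0" for i by (simp add: A_def sp_nz assms)
  have "(Xf^^p) y = (\<Prod>i\<le>p. f i)" by (simp add: Xfn_formula f_def A_def)
  also have "\<dots> = f 0 * (\<Prod>i<q. f (Suc i)) * f p"
  proof -
    have "(\<Prod>i\<le>Suc q. f i) = (\<Prod>i<Suc (Suc q). f i)" by (simp only: lessThan_Suc_atMost)
    also have "\<dots> = (\<Prod>i<Suc q. f i) * f (Suc q)" by (rule prod.lessThan_Suc)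
    also have "(\<Prod>i<Suc q. f i) = f 0 * (\<Prod>i<q. f (Suc i))" by (rule prod.lessThan_Suc_shift)
    finally show ?thesis unfolding q .
  qed
  also have "\<dots> = (y ^ ((p - 1) ^ p + 1)) * (\<Prod>i<q. f (Suc i))"
    by (simp add: f_def A_def sp_p power_add mult_ac)
  finally have eq: "(Xf^^p) y = y ^ ((p - 1) ^ p + 1) * (\<Prod>i<q. f (Suc i))" .
  have s1: "sc (y ^ ((p - 1) ^ p + 1)) 1" using sc_dvd_exp[OF assms p_dvd_pow] .
  have s2: "sc (\<Prod>i<q. f (Suc i)) (\<Prod>i<q. 1)"
  proof (rule sc_prod)
    show "\<forall>i\<in>{..<q}. sc (f (Suc i)) 1"
    proof
      fix i assume "i \<in> {..<q}"
      hence "Suc i < p" "Suc i \<noteq> 0" using q by auto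
      hence "p dvd (p choose Suc i)" using dvd_choose_prime p_prime p_pos by blast
      thus "sc (f (Suc i)) 1" unfolding f_def using sc_dvd_exp[OF Anz] by simp
    qed
  qed simp
  have "sc (y ^ ((p - 1) ^ p + 1) * (\<Prod>i<q. f (Suc i))) (1 * (\<Prod>i<q. 1))" by (rule sc_mult[OF s1 s2])
  thus ?thesis using eq by simp
qed

end

context L begin

definition Pc :: "'k \<Rightarrow> (nat \<Rightarrow> nat) \<Rightarrow> 'k" where
  "Pc g c = (\<Prod>i<p. ((\<sigma>^^i) g) ^ (c i))"

lemma Pc_nz: "g \<noteq> 0 \<Longrightarrow> Pc g c \<noteq> 0" by (simp add: Pc_def sp_nz)

lemma mem_M: "x \<in> Mcyc p \<sigma> g \<longleftrightarrow> x \<noteq> 0 \<and> (\<exists>c. sc x (Pc g c))"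
  by (simp add: Mcyc_def Pc_def)

lemma M_gamma: assumes "g \<noteq> 0" shows "g \<in> Mcyc p \<sigma> g"
proof -
  have "Pc g (\<lambda>i. if i = 0 then 1 else 0) = (\<Prod>i<p. if i = 0 then (\<sigma>^^i) g else 1)"
    unfolding Pc_def by (rule prod.cong) auto
  also have "\<dots> = g" using p_pos by (simp add: prod.delta)
  finally have "Pc g (\<lambda>i. if i = 0 then 1 else 0) = g" .
  hence "sc g (Pc g (\<lambda>i. if i = 0 then 1 else 0))" using sc_refl[OF assms] by simp
  thus ?thesis using assms unfolding mem_M by blast
qed

lemma M_one: assumes "g \<noteq> 0" shows "1 \<in> Mcyc p \<sigma> g"
proof -
  have "Pc g (\<lambda>i. 0) = 1" by (simp add: Pc_def)
  hence "sc 1 (Pc g (\<lambda>i. 0))" using sc_refl[of 1] by simp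
  thus ?thesis unfolding mem_M by auto
qed

lemma M_mult: assumes "x \<in> Mcyc p \<sigma> g" "y \<in> Mcyc p \<sigma> g" shows "x * y \<in> Mcyc p \<sigma> g"
proof -
  obtain c d where cd: "sc x (Pc g c)" "sc y (Pc g d)" "x \<noteq> 0" "y \<noteq> 0" using assms unfolding mem_M by blast
  have "Pc g c * Pc g d = Pc g (\<lambda>i. c i + d i)" by (simp add: Pc_def power_add prod.distrib)
  hence "sc (x * y) (Pc g (\<lambda>i. c i + d i))" using sc_mult[OF cd(1,2)] by simp
  thus ?thesis unfolding mem_M using cd(3,4) by auto
qed

lemma M_pow: assumes "g \<noteq> 0" "x \<in> Mcyc p \<sigma> g" shows "x ^ n \<in> Mcyc p \<sigma> g"
  by (induction n) (auto simp: M_one assms M_mult)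

lemma M_sc: assumes "x \<in> Mcyc p \<sigma> g" "sc y x" shows "y \<in> Mcyc p \<sigma> g"
proof -
  obtain c where "sc x (Pc g c)" using assms unfolding mem_M by blast
  hence "sc y (Pc g c)" using sc_trans[OF assms(2)] by blast
  thus ?thesis unfolding mem_M using sc_nz by blast
qed

lemma M_sigma: assumes "x \<in> Mcyc p \<sigma> g" shows "\<sigma> x \<in> Mcyc p \<sigma> g"
proof -
  obtain c where c: "sc x (Pc g c)" using assms unfolding mem_M by blast
  define c' where "c' i = c ((i + p - 1) mod p)" for i
  define f where "f i = ((\<sigma>^^i) g) ^ (c' i)" for i
  have "\<sigma> (Pc g c) = (\<Prod>i<p. ((\<sigma>^^Suc i) g) ^ (c i))" by (simp add: Pc_def sig_prod sig_pow)
  also have "\<dots> = (\<Prod>i<p. f (Suc i))"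
  proof (rule prod.cong)
    fix i assume "i \<in> {..<p}"
    hence "(Suc i + p - 1) mod p = i" by (simp add: mod_if)
    thus "((\<sigma>^^Suc i) g) ^ (c i) = f (Suc i)" by (simp add: f_def c'_def)
  qed simp
  also have "\<dots> = (\<Prod>i<p. f i)"
  proof (rule prod_shift)
    have "p + p - 1 = (p - 1) + p" using p_pos by simp
    hence "(p + p - 1) mod p = (p - 1) mod p" by simp
    thus "f p = f 0" by (simp add: f_def c'_def sp_p)
  qed
  finally have "\<sigma> (Pc g c) = Pc g c'" by (simp add: Pc_def f_def)
  hence "sc (\<sigma> x) (Pc g c')" using sc_sigma[OF c] by simp
  thus ?thesis unfolding mem_M using sc_nz by blast
qed

lemma M_Xf: assumes "g \<noteq> 0" "x \<in> Mcyc p \<sigma> g" shows "Xf x \<in> Mcyc p \<sigma> g"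
  unfolding Xf_def by (rule M_mult[OF M_sigma[OF assms(2)] M_pow[OF assms]])

lemma M_Xfn: assumes "g \<noteq> 0" shows "(Xf^^j) g \<in> Mcyc p \<sigma> g"
  by (induction j) (auto simp: M_gamma assms M_Xf)

end

context L begin

lemma dep:
  fixes x :: "nat \<Rightarrow> nat \<Rightarrow> nat"
  assumes "m < n"
  shows "\<exists>e. (\<forall>i<n. e i < p) \<and> (\<exists>i<n. e i \<noteq> 0) \<and> (\<forall>j<m. p dvd (\<Sum>i<n. e i * x i j))"
proof -
  define A where "A = PiE {..<n} (\<lambda>_. {..<p})"
  define B where "B = PiE {..<m} (\<lambda>_. {..<p})"
  define \<phi> where "\<phi> e = restrict (\<lambda>j. (\<Sum>i<n. e i * x i j) mod p) {..<m}" for e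
  have sub: "\<phi> ` A \<subseteq> B"
  proof
    fix y assume "y \<in> \<phi> ` A"
    then obtain e where "y = \<phi> e" by blast
    thus "y \<in> B" unfolding \<phi>_def B_def by (auto intro!: restrict_PiE_iff[THEN iffD2] simp: p_pos)
  qed
  have cA: "card A = p^n" by (simp add: A_def card_PiE)
  have cB: "card B = p^m" by (simp add: B_def card_PiE)
  have "p^m < p^n" using assms p_gt2 by (simp add: power_strict_increasing)
  moreover have "finite B" by (simp add: B_def finite_PiE)
  ultimately have "\<not> inj_on \<phi> A" using card_inj_on_le[of \<phi> A B] sub cA cB by linarith
  then obtain e1 e2 where e12: "e1 \<in> A" "e2 \<in> A" "e1 \<noteq> e2" "\<phi> e1 = \<phi> e2" by (auto simp: inj_on_def)
  obtain i0 where i0: "i0 < n" "e1 i0 \<noteq> e2 i0"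
  proof -
    have "\<exists>i<n. e1 i \<noteq> e2 i"
    proof (rule ccontr)
      assume "\<not> ?thesis"
      hence "e1 = e2" using PiE_ext[of e1 "{..<n}" "\<lambda>_. {..<p}" e2] e12(1,2) by (auto simp: A_def)
      thus False using e12(3) by simp
    qed
    thus ?thesis using that by blast
  qed
  have lt: "e1 i < p" "e2 i < p" if "i < n" for i using e12(1,2) that by (auto simp: A_def PiE_iff)
  define d where "d i = nat ((int (e1 i) - int (e2 i)) mod int p)" for i
  have dint: "int (d i) = (int (e1 i) - int (e2 i)) mod int p" for i using p_pos by (simp add: d_def)
  have "d i < p" for i
  proof -
    have "int (d i) < int p" unfolding dint using p_pos by simp
    thus ?thesis by simp
  qed
  moreover have "d i0 \<noteq> 0"
  proof
    assume "d i0 = 0"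
    hence "int p dvd int (e1 i0) - int (e2 i0)" using dint[of i0] by (simp add: dvd_eq_mod_eq_0)
    moreover have "\<bar>int (e1 i0) - int (e2 i0)\<bar> < int p" using lt[OF i0(1)] by auto
    ultimately have "int (e1 i0) - int (e2 i0) = 0"
    proof -
      assume a1: "int p dvd int (e1 i0) - int (e2 i0)" and a2: "\<bar>int (e1 i0) - int (e2 i0)\<bar> < int p"
      show ?thesis
      proof (rule ccontr)
        assume "int (e1 i0) - int (e2 i0) \<noteq> 0"
        hence "\<bar>int p\<bar> \<le> \<bar>int (e1 i0) - int (e2 i0)\<bar>" using dvd_imp_le_int a1 by blast
        thus False using a2 by simp
      qed
    qed
    thus False using i0(2) by simp
  qed
  moreover have "p dvd (\<Sum>i<n. d i * x i j)" if j: "j < m" for j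
  proof -
    have "\<phi> e1 j = \<phi> e2 j" using e12(4) by simp
    hence "(\<Sum>i<n. e1 i * x i j) mod p = (\<Sum>i<n. e2 i * x i j) mod p" using j by (simp add: \<phi>_def)
    hence "int (\<Sum>i<n. e1 i * x i j) mod int p = int (\<Sum>i<n. e2 i * x i j) mod int p"
      by (metis of_nat_mod)
    hence z: "(int (\<Sum>i<n. e1 i * x i j) - int (\<Sum>i<n. e2 i * x i j)) mod int p = 0"
      by (simp add: mod_eq_dvd_iff dvd_eq_mod_eq_0[symmetric])
    have "int (\<Sum>i<n. d i * x i j) = (\<Sum>i<n. ((int (e1 i) - int (e2 i)) mod int p) * int (x i j))"
      by (simp add: dint)
    also have "\<dots> mod int p = (\<Sum>i<n. ((int (e1 i) - int (e2 i)) * int (x i j))) mod int p"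
    proof -
      have "(\<Sum>i<n. ((int (e1 i) - int (e2 i)) mod int p) * int (x i j)) mod int p
          = (\<Sum>i<n. ((int (e1 i) - int (e2 i)) mod int p) * int (x i j) mod int p) mod int p"
        by (simp add: mod_sum_eq)
      also have "\<dots> = (\<Sum>i<n. ((int (e1 i) - int (e2 i)) * int (x i j)) mod int p) mod int p"
        by (simp add: mod_mult_left_eq)
      also have "\<dots> = (\<Sum>i<n. ((int (e1 i) - int (e2 i)) * int (x i j))) mod int p"
        by (simp add: mod_sum_eq)
      finally show ?thesis .
    qed
    also have "(\<Sum>i<n. ((int (e1 i) - int (e2 i)) * int (x i j)))
        = int (\<Sum>i<n. e1 i * x i j) - int (\<Sum>i<n. e2 i * x i j)"
      by (simp add: left_diff_distrib sum_subtractf)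
    finally have "int (\<Sum>i<n. d i * x i j) mod int p = 0" using z by simp
    hence "int p dvd int (\<Sum>i<n. d i * x i j)" by (simp add: dvd_eq_mod_eq_0)
    thus ?thesis by (simp only: of_nat_dvd_iff)
  qed
  ultimately show ?thesis using i0(1) by blast
qed

lemma dep_sc:
  fixes m n :: nat
  assumes "m < n" "\<forall>i<n. sc (v i) (\<Prod>j<m. b j ^ x i j)" "\<forall>j<m. b j \<noteq> 0"
  shows "\<exists>e. (\<forall>i<n. e i < p) \<and> (\<exists>i<n. e i \<noteq> 0) \<and> sc (\<Prod>i<n. v i ^ e i) 1"
proof -
  obtain e where e: "\<forall>i<n. e i < p" "\<exists>i<n. e i \<noteq> 0" "\<forall>j<m. p dvd (\<Sum>i<n. e i * x i j)"
    using dep[OF assms(1), of x] by blast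
  have s1: "sc (\<Prod>i<n. v i ^ e i) (\<Prod>i<n. (\<Prod>j<m. b j ^ x i j) ^ e i)"
    by (rule sc_prod) (simp_all add: sc_pow assms(2))
  have "(\<Prod>i<n. (\<Prod>j<m. b j ^ x i j) ^ e i) = (\<Prod>i<n. \<Prod>j<m. b j ^ (e i * x i j))"
    by (simp add: prod_power_distrib power_mult[symmetric] mult.commute)
  also have "\<dots> = (\<Prod>j<m. \<Prod>i<n. b j ^ (e i * x i j))" by (rule prod.swap)
  also have "\<dots> = (\<Prod>j<m. b j ^ (\<Sum>i<n. e i * x i j))" by (simp add: power_sum)
  finally have eq: "(\<Prod>i<n. (\<Prod>j<m. b j ^ x i j) ^ e i) = (\<Prod>j<m. b j ^ (\<Sum>i<n. e i * x i j))" .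
  have s2: "sc (\<Prod>j<m. b j ^ (\<Sum>i<n. e i * x i j)) (\<Prod>j<m. 1)"
    by (rule sc_prod) (simp_all add: sc_dvd_exp assms(3) e(3))
  have "sc (\<Prod>i<n. v i ^ e i) 1" using sc_trans[OF s1[unfolded eq] s2] by simp
  thus ?thesis using e(1,2) by blast
qed

end

context L begin

lemma sc_cancel1: assumes "sc (x * r) 1" "sc r 1" shows "sc x 1"
proof -
  have r: "r \<noteq> 0" using sc_nz[OF assms(2)] by simp
  have "sc (r * x) (r * 1)" using sc_trans[OF assms(1) sc_sym[OF assms(2)]] by (simp add: mult.commute)
  thus ?thesis using sc_cancel[OF _ r] by blast
qed

lemma sp_sc: assumes "sc (\<sigma> g) g" shows "sc ((\<sigma>^^i) g) g"
proof (induction i)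
  case 0 thus ?case using sc_nz[OF assms] sc_refl by simp
next
  case (Suc i)
  have "sc ((\<sigma>^^Suc i) g) (\<sigma> g)" using sc_sigma[OF Suc] by simp
  thus ?case by (rule sc_trans[OF _ assms])
qed

lemma Jdim2_basis:
  assumes "Jdim_eq p M 2"
  obtains b1 b2 where "b1 \<in> M" "b2 \<in> M" "b1 \<noteq> 0" "b2 \<noteq> 0"
    "\<And>x. x \<in> M \<Longrightarrow> \<exists>u v. sc x (b1 ^ u * b2 ^ v)"
    "\<And>u v. u < p \<Longrightarrow> v < p \<Longrightarrow> sc (b1 ^ u * b2 ^ v) 1 \<Longrightarrow> u = 0 \<and> v = 0"
proof -
  obtain B where B: "finite B" "card B = 2" "B \<subseteq> M" "0 \<notin> B" "Jindep p B" "Jspan p B = M"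
    using assms unfolding Jdim_eq_def by (elim exE conjE) (rule that; assumption)
  obtain b1 b2 where b: "B = {b1, b2}" "b1 \<noteq> b2" using B(2) unfolding card_2_iff by blast
  have coord: "\<exists>u v. sc x (b1 ^ u * b2 ^ v)" if "x \<in> M" for x
  proof -
    have "x \<in> Jspan p B" using B(6) that by simp
    hence "\<exists>T e. finite T \<and> T \<subseteq> B \<and> sc x (\<Prod>s\<in>T. s ^ e s)" unfolding Jspan_def by simp
    then obtain T e where T: "finite T" "T \<subseteq> B" "sc x (\<Prod>s\<in>T. s ^ e s)" by blast
    have "(\<Prod>s\<in>T. s ^ e s) = (\<Prod>s\<in>B. s ^ (if s \<in> T then e s else 0))"
      by (rule prod.mono_neutral_cong_left) (use T B in auto)
    also have "\<dots> = b1 ^ (if b1 \<in> T then e b1 else 0) * b2 ^ (if b2 \<in> T then e b2 else 0)"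
      using b by simp
    finally show ?thesis using T(3) by (intro exI) simp
  qed
  have ind: "u = 0 \<and> v = 0" if "u < p" "v < p" "sc (b1 ^ u * b2 ^ v) 1" for u v
  proof -
    define e where "e s = (if s = b1 then u else v)" for s
    have "(\<Prod>s\<in>B. s ^ e s) = b1 ^ u * b2 ^ v" using b by (simp add: e_def)
    moreover have imp: "finite B \<and> B \<subseteq> B \<and> (\<forall>s\<in>B. e s < p) \<and> sc (\<Prod>s\<in>B. s ^ e s) 1 \<longrightarrow> (\<forall>s\<in>B. e s = 0)"
      using B(5) unfolding Jindep_def by (rule spec[of _ e, OF spec[of _ B]])
    moreover have "\<forall>s\<in>B. e s < p" using that by (simp add: e_def)
    ultimately have "\<forall>s\<in>B. e s = 0" using B(1) that(3) by simp
    thus ?thesis using b by (auto simp: e_def)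
  qed
  have "b1 \<in> M" "b2 \<in> M" "b1 \<noteq> 0" "b2 \<noteq> 0" using b B(3,4) by auto
  thus ?thesis using that[of b1 b2] coord ind by simp
qed


lemma prod3: "(\<Prod>i<Suc (Suc (Suc 0)). f i) = f 0 * f 1 * (f 2 :: 'k)"
  by (simp add: numeral_2_eq_2)
lemma prod2: "(\<Prod>i<Suc (Suc 0). f i) = f 0 * (f 1 :: 'k)"
  by simp
lemma prod1: "(\<Prod>i<Suc 0. f i) = (f 0 :: 'k)"
  by simp

lemma module_b:
  assumes g: "g \<noteq> 0" and dim: "Jdim_eq p (Mcyc p \<sigma> g) 2"
  shows "\<not> sc (Xf g) 1"
proof
  assume a: "sc (Xf g) 1"
  obtain b1 b2 where b: "b1 \<in> Mcyc p \<sigma> g" "b2 \<in> Mcyc p \<sigma> g" "b1 \<noteq> 0" "b2 \<noteq> 0"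
    and ind: "\<And>u v. u < p \<Longrightarrow> v < p \<Longrightarrow> sc (b1 ^ u * b2 ^ v) 1 \<Longrightarrow> u = 0 \<and> v = 0"
    using Jdim2_basis[OF dim] by metis
  have sg: "sc (\<sigma> g) g" using a Xf_fix g by simp
  have span1: "\<exists>s. sc x (g ^ s)" if xM: "x \<in> Mcyc p \<sigma> g" for x
  proof -
    obtain c where c: "sc x (Pc g c)" using xM unfolding mem_M by blast
    have "sc (Pc g c) (\<Prod>i<p. g ^ c i)" unfolding Pc_def
      by (rule sc_prod) (simp_all add: sc_pow sp_sc[OF sg])
    hence "sc x (g ^ (\<Sum>i<p. c i))" using sc_trans[OF c] by (simp add: power_sum)
    thus ?thesis by blast
  qed
  obtain s1 where s1: "sc b1 (g ^ s1)" using span1 b(1) by blast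
  obtain s2 where s2: "sc b2 (g ^ s2)" using span1 b(2) by blast
  define v where "v i = (if i = 0 then b1 else b2)" for i :: nat
  define x where "x i j = (if i = 0 then s1 else s2)" for i j :: nat
  have "\<forall>i<Suc (Suc 0). sc (v i) (\<Prod>j<Suc 0. (\<lambda>_. g) j ^ x i j)"
    using s1 s2 by (simp add: v_def x_def less_Suc_eq)
  then obtain e where e: "\<forall>i<Suc (Suc 0). e i < p" "\<exists>i<Suc (Suc 0). e i \<noteq> 0"
      "sc (\<Prod>i<Suc (Suc 0). v i ^ e i) 1"
    using dep_sc[of "Suc 0" "Suc (Suc 0)" v "\<lambda>_. g" x] g by auto
  have "sc (b1 ^ e 0 * b2 ^ e 1) 1" using e(3) by (simp add: v_def)
  moreover have "e 0 < p" "e 1 < p" using e(1) by auto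
  ultimately have "e 0 = 0 \<and> e 1 = 0" using ind by blast
  thus False using e(2) by (auto simp: less_Suc_eq)
qed

lemma module_a:
  assumes g: "g \<noteq> 0" and dim: "Jdim_eq p (Mcyc p \<sigma> g) 2"
  shows "sc (Xf (Xf g)) 1"
proof (rule ccontr)
  assume a: "\<not> sc (Xf (Xf g)) 1"
  obtain b1 b2 where b: "b1 \<in> Mcyc p \<sigma> g" "b2 \<in> Mcyc p \<sigma> g" "b1 \<noteq> 0" "b2 \<noteq> 0"
    and coord: "\<And>x. x \<in> Mcyc p \<sigma> g \<Longrightarrow> \<exists>u v. sc x (b1 ^ u * b2 ^ v)"
    using Jdim2_basis[OF dim] by metis
  define K where "K = {k. \<not> sc ((Xf^^k) g) 1}"
  have "2 \<in> K" using a by (simp add: K_def numeral_2_eq_2)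
  have Kb: "k < p" if "k \<in> K" for k
  proof (rule ccontr)
    assume "\<not> k < p"
    hence "k = (k - p) + p" by simp
    hence "(Xf^^k) g = (Xf^^(k - p)) ((Xf^^p) g)" by (metis funpow_add o_apply)
    hence "sc ((Xf^^k) g) 1" using Xfn_sc1[OF Xf_nil[OF g]] by simp
    thus False using that by (simp add: K_def)
  qed
  have finK: "finite K" using Kb by (meson finite_lessThan finite_subset lessThan_iff subsetI)
  define k where "k = Max K"
  have kK: "k \<in> K" unfolding k_def using Max_in[OF finK] \<open>2 \<in> K\<close> by blast
  have k2: "2 \<le> k" using finK \<open>2 \<in> K\<close> by (simp add: k_def)
  have "Suc k \<notin> K" using finK k_def by (metis Max_ge Suc_n_not_le_n)
  hence XS: "sc ((Xf^^Suc k) g) 1" by (simp add: K_def)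
  obtain j where kj: "k = j + 2" using k2 by (metis le_add_diff_inverse2)
  define v where "v i = (Xf^^(j + i)) g" for i
  have v2e: "v 2 = (Xf^^k) g" unfolding v_def kj ..
  have v2: "\<not> sc (v 2) 1" using kK unfolding v2e by (simp add: K_def)
  have Xv2: "sc (Xf (v 2)) 1" using XS unfolding v2e by simp
  have Xv0: "Xf (v 0) = v (Suc 0)" and Xv1: "Xf (v (Suc 0)) = v 2"
    by (simp_all add: v_def numeral_2_eq_2)
  have XXv2: "sc (Xf (Xf (v 2))) 1" using Xf_sc1[OF Xv2] .
  have vnz: "v i \<noteq> 0" for i by (simp add: v_def Xfn_nz g)
  have nroot: "e = 0" if "e < p" "sc (v 2 ^ e) 1" for e
  proof (rule ccontr)
    assume "e \<noteq> 0"
    hence "\<not> p dvd e" using that(1) by (auto dest: dvd_imp_le)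
    thus False using sc_root[OF that(2) _ vnz] v2 by blast
  qed
  have indep: "e0 = 0 \<and> e1 = 0 \<and> e2 = 0"
    if e: "e0 < p" "e1 < p" "e2 < p" "sc (v 0 ^ e0 * v 1 ^ e1 * v 2 ^ e2) 1" for e0 e1 e2
  proof -
    have "sc (Xf (Xf (v 0 ^ e0 * v 1 ^ e1 * v 2 ^ e2))) 1" using Xf_sc1[OF Xf_sc1[OF e(4)]] .
    hence "sc (v 2 ^ e0 * ((Xf (v 2)) ^ e1 * (Xf (Xf (v 2))) ^ e2)) 1"
      by (simp add: Xf_mult Xf_pow Xv0 Xv1 mult.assoc)
    moreover have "sc ((Xf (v 2)) ^ e1 * (Xf (Xf (v 2))) ^ e2) 1"
      using sc_mult[OF sc_pow[OF Xv2, of e1] sc_pow[OF XXv2, of e2]] by simp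
    ultimately have "sc (v 2 ^ e0) 1" by (rule sc_cancel1)
    hence e0: "e0 = 0" using nroot e(1) by blast
    have "sc (Xf (v 0 ^ e0 * v 1 ^ e1 * v 2 ^ e2)) 1" using Xf_sc1[OF e(4)] .
    hence "sc (v 2 ^ e1 * (Xf (v 2)) ^ e2) 1"
      by (simp add: Xf_mult Xf_pow Xv0 Xv1 e0 Xf_1)
    moreover have "sc ((Xf (v 2)) ^ e2) 1" using sc_pow[OF Xv2, of e2] by simp
    ultimately have "sc (v 2 ^ e1) 1" by (rule sc_cancel1)
    hence e1: "e1 = 0" using nroot e(2) by blast
    have "sc (v 2 ^ e2) 1" using e(4) by (simp add: e0 e1)
    hence "e2 = 0" using nroot e(3) by blast
    thus ?thesis using e0 e1 by simp
  qed
  have "\<forall>i. \<exists>u w. sc (v i) (b1 ^ u * b2 ^ w)"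
    using coord M_Xfn[OF g] by (simp add: v_def)
  then obtain U W where UW: "\<And>i. sc (v i) (b1 ^ U i * b2 ^ W i)" by metis
  define bb where "bb j = (if j = 0 then b1 else b2)" for j :: nat
  define x where "x i j = (if j = 0 then U i else W i)" for i j :: nat
  have "\<forall>i<Suc (Suc (Suc 0)). sc (v i) (\<Prod>j<Suc (Suc 0). bb j ^ x i j)"
    using UW by (simp add: bb_def x_def)
  moreover have "\<forall>j<Suc (Suc 0). bb j \<noteq> 0" using b(3,4) by (simp add: bb_def)
  ultimately obtain e where e: "\<forall>i<Suc (Suc (Suc 0)). e i < p" "\<exists>i<Suc (Suc (Suc 0)). e i \<noteq> 0"
      "sc (\<Prod>i<Suc (Suc (Suc 0)). v i ^ e i) 1"
    using dep_sc[of "Suc (Suc 0)" "Suc (Suc (Suc 0))" v bb x] by blast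
  have "sc (v 0 ^ e 0 * v 1 ^ e 1 * v 2 ^ e 2) 1" using e(3) unfolding prod3 .
  moreover have "e 0 < p" "e 1 < p" "e 2 < p" using e(1) by (simp_all add: numeral_2_eq_2)
  ultimately have "e 0 = 0 \<and> e 1 = 0 \<and> e 2 = 0" using indep by blast
  thus False using e(2) by (auto simp: less_Suc_eq numeral_2_eq_2)
qed

end

context L begin

lemma final:
  assumes xn: "\<exists>\<beta>. \<beta> \<noteq> 0 \<and> \<xi> = Nm \<beta>" and g: "g \<noteq> 0" and dim: "Jdim_eq p (Mcyc p \<sigma> g) 2"
  shows "\<exists>\<alpha>. \<alpha> \<noteq> 0 \<and> Jspan p {Nm \<alpha>} = Jfixed p \<sigma> (Mcyc p \<sigma> g)"
proof -
  obtain \<beta> where b: "\<beta> \<noteq> 0" "Nm \<beta> = \<xi>" using xn by metis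
  define c0 where "c0 = Xf g"
  have c0nz: "c0 \<noteq> 0" using g by (simp add: c0_def Xf_nz)
  have h1: "sc (Xf c0) 1" using module_a[OF g dim] by (simp add: c0_def)
  have h2: "\<not> sc c0 1" using module_b[OF g dim] by (simp add: c0_def)
  have sc0: "sc (\<sigma> c0) c0" using h1 Xf_fix c0nz by simp
  define c1 where "c1 = \<sigma> g * inverse g"
  have "c1 * g ^ p = c0"
  proof -
    have "g ^ p = g * g ^ (p - 1)" using p_pos by (metis Suc_diff_1 power_Suc)
    thus ?thesis using g by (simp add: c1_def c0_def Xf_def)
  qed
  hence c01: "sc c0 c1" using sc_ppow[of c1 g] g sig_nz by (simp add: c1_def)
  have "Nm c1 = 1" using N_nz[OF g] by (simp add: c1_def N_mult N_inverse N_of_sigma)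
  moreover have "sc (\<sigma> c1) c1"
    using sc_trans[OF sc_trans[OF sc_sigma[OF sc_sym[OF c01]] sc0] c01] .
  ultimately obtain \<alpha> where al: "\<alpha> \<noteq> 0" "sc c1 (Nm \<alpha>)" using norm_class[OF b] by blast
  have c0N: "sc c0 (Nm \<alpha>)" using sc_trans[OF c01 al(2)] .
  have Nnz: "Nm \<alpha> \<noteq> 0" using N_nz al(1) by blast
  have c0M: "c0 \<in> Mcyc p \<sigma> g" unfolding c0_def by (rule M_Xf[OF g M_gamma[OF g]])
  have "Jspan p {Nm \<alpha>} = Jfixed p \<sigma> (Mcyc p \<sigma> g)"
  proof
    show "Jspan p {Nm \<alpha>} \<subseteq> Jfixed p \<sigma> (Mcyc p \<sigma> g)"
    proof
      fix x assume "x \<in> Jspan p {Nm \<alpha>}"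
      then obtain T e where T: "finite T" "T \<subseteq> {Nm \<alpha>}" "sc x (\<Prod>s\<in>T. s ^ e s)"
        unfolding Jspan_def by blast
      have "\<exists>n. sc x (Nm \<alpha> ^ n)"
      proof (cases "T = {}")
        case True thus ?thesis using T(3) by (intro exI[of _ 0]) simp
      next
        case False
        hence "T = {Nm \<alpha>}" using T(2) by blast
        thus ?thesis using T(3) by (intro exI[of _ "e (Nm \<alpha>)"]) simp
      qed
      then obtain n where n: "sc x (Nm \<alpha> ^ n)" by blast
      have "sc x (c0 ^ n)" using sc_trans[OF n sc_pow[OF sc_sym[OF c0N]]] .
      hence xM: "x \<in> Mcyc p \<sigma> g" using M_sc[OF M_pow[OF g c0M]] by blast
      have "sc (\<sigma> x) (\<sigma> (Nm \<alpha> ^ n))" using sc_sigma[OF n] .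
      hence "sc (\<sigma> x) (Nm \<alpha> ^ n)" by (simp add: sig_pow N_sigma)
      hence "sc (\<sigma> x) x" using sc_trans[OF _ sc_sym[OF n]] by blast
      thus "x \<in> Jfixed p \<sigma> (Mcyc p \<sigma> g)" using xM by (simp add: Jfixed_def)
    qed
  next
    show "Jfixed p \<sigma> (Mcyc p \<sigma> g) \<subseteq> Jspan p {Nm \<alpha>}"
    proof
      fix x assume "x \<in> Jfixed p \<sigma> (Mcyc p \<sigma> g)"
      hence xM: "x \<in> Mcyc p \<sigma> g" and xf: "sc (\<sigma> x) x" by (auto simp: Jfixed_def)
      obtain c where c: "sc x (Pc g c)" using xM unfolding mem_M by blast
      have gc0: "sc (\<sigma> g) (g * c0)"
      proof -
        have "g * c0 = \<sigma> g * g ^ p"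
        proof -
          have "g ^ p = g * g ^ (p - 1)" using p_pos by (metis Suc_diff_1 power_Suc)
          thus ?thesis by (simp add: c0_def Xf_def mult_ac)
        qed
        thus ?thesis using sc_sym[OF sc_ppow[OF sig_nz[OF g] g]] by simp
      qed
      have spi: "sc ((\<sigma>^^i) g) (g * c0 ^ i)" for i
      proof (induction i)
        case 0 thus ?case using sc_refl[OF g] by simp
      next
        case (Suc i)
        have "sc ((\<sigma>^^Suc i) g) (\<sigma> g * \<sigma> c0 ^ i)"
          using sc_sigma[OF Suc] by (simp add: sigma_mult sig_pow)
        moreover have "sc (\<sigma> g * \<sigma> c0 ^ i) (g * c0 * c0 ^ i)"
          by (rule sc_mult[OF gc0 sc_pow[OF sc0]])
        ultimately have "sc ((\<sigma>^^Suc i) g) (g * c0 * c0 ^ i)" by (rule sc_trans)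
        thus ?case by (simp add: mult.assoc)
      qed
      define S where "S = (\<Sum>i<p. c i)"
      define T where "T = (\<Sum>i<p. i * c i)"
      have "sc (Pc g c) (\<Prod>i<p. (g * c0 ^ i) ^ c i)" unfolding Pc_def
        by (rule sc_prod) (simp_all add: sc_pow spi)
      also have "(\<Prod>i<p. (g * c0 ^ i) ^ c i) = g ^ S * c0 ^ T"
        by (simp add: S_def T_def power_mult_distrib prod.distrib power_sum power_mult[symmetric])
      finally have xST: "sc x (g ^ S * c0 ^ T)" using sc_trans[OF c] by blast
      have "sc (\<sigma> x) (\<sigma> g ^ S * \<sigma> c0 ^ T)" using sc_sigma[OF xST] by (simp add: sigma_mult sig_pow)
      moreover have "sc (\<sigma> g ^ S * \<sigma> c0 ^ T) ((g * c0) ^ S * c0 ^ T)"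
        by (rule sc_mult[OF sc_pow[OF gc0] sc_pow[OF sc0]])
      ultimately have "sc (\<sigma> x) ((g * c0) ^ S * c0 ^ T)" by (rule sc_trans)
      hence "sc x ((g * c0) ^ S * c0 ^ T)" using sc_trans[OF sc_sym[OF xf]] by blast
      hence "sc (g ^ S * c0 ^ T) ((g * c0) ^ S * c0 ^ T)" using sc_trans[OF sc_sym[OF xST]] by blast
      hence "sc ((g ^ S * c0 ^ T) * 1) ((g ^ S * c0 ^ T) * c0 ^ S)" by (simp add: power_mult_distrib mult_ac)
      hence "sc 1 (c0 ^ S)" using sc_cancel g c0nz by simp
      hence "sc (c0 ^ S) 1" by (rule sc_sym)
      hence "p dvd S" using sc_root h2 c0nz by blast
      hence "sc (g ^ S) 1" using sc_dvd_exp g by blast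
      moreover have "sc (c0 ^ T) (c0 ^ T)" using sc_refl c0nz by simp
      ultimately have "sc (g ^ S * c0 ^ T) (1 * c0 ^ T)" by (rule sc_mult)
      hence "sc x (c0 ^ T)" using sc_trans[OF xST] by simp
      hence "sc x (Nm \<alpha> ^ T)" by (rule sc_trans[OF _ sc_pow[OF c0N]])
      hence "sc x (\<Prod>s\<in>{Nm \<alpha>}. s ^ (\<lambda>_. T) s)" by simp
      moreover have "x \<noteq> 0" using xM unfolding mem_M by blast
      ultimately show "x \<in> Jspan p {Nm \<alpha>}" unfolding Jspan_def
        by (intro CollectI conjI exI[of _ "{Nm \<alpha>}"] exI[of _ "\<lambda>_. T"]) auto
    qed
  qed
  thus ?thesis using al(1) by blast
qed

end

theorem mainTheorem8:
  fixes p :: nat and F :: "'k::field set" and \<xi> a \<delta> :: 'k and \<sigma> :: "'k \<Rightarrow> 'k"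
  assumes p_prime: "prime p" and p_gt2: "p > 2"
    and F_sub: "0 \<in> F" "1 \<in> F" "\<And>x y. x \<in> F \<Longrightarrow> y \<in> F \<Longrightarrow> x + y \<in> F"
      "\<And>x. x \<in> F \<Longrightarrow> - x \<in> F" "\<And>x y. x \<in> F \<Longrightarrow> y \<in> F \<Longrightarrow> x * y \<in> F"
      "\<And>x. x \<in> F \<Longrightarrow> inverse x \<in> F"
    and char: "of_nat p \<noteq> (0::'k)"
    and xi_F: "\<xi> \<in> F" and xi_root: "\<xi> ^ p = 1" and xi_prim: "\<And>k. 0 < k \<Longrightarrow> k < p \<Longrightarrow> \<xi> ^ k \<noteq> 1"
    and a_F: "a \<in> F" and a_nz: "a \<noteq> 0" and a_not_pow: "\<not> (\<exists>b\<in>F. b ^ p = a)"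
    and delta: "\<delta> ^ p = a"
    and K_gen: "\<And>x. \<exists>c. (\<forall>i. c i \<in> F) \<and> x = (\<Sum>i<p. c i * \<delta> ^ i)"
    and sigma_add: "\<And>x y. \<sigma> (x + y) = \<sigma> x + \<sigma> y"
    and sigma_mult: "\<And>x y. \<sigma> (x * y) = \<sigma> x * \<sigma> y"
    and sigma_bij: "bij \<sigma>"
    and sigma_F: "\<And>x. x \<in> F \<Longrightarrow> \<sigma> x = x"
    and sigma_delta: "\<sigma> \<delta> = \<xi> * \<delta>"
    and xi_norm: "\<exists>\<beta>. \<beta> \<noteq> 0 \<and> \<xi> = Jnorm p \<sigma> \<beta>"
  shows "\<forall>\<gamma>. \<gamma> \<noteq> 0 \<and> Jdim_eq p (Mcyc p \<sigma> \<gamma>) 2 \<longrightarrow>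
           (\<exists>\<alpha>. \<alpha> \<noteq> 0 \<and> Jspan p {Jnorm p \<sigma> \<alpha>} = Jfixed p \<sigma> (Mcyc p \<sigma> \<gamma>))"
proof -
  interpret L p F \<xi> a \<delta> \<sigma>
    by (rule L.intro) (fact assms)+
  show ?thesis
  proof (intro allI impI)
    fix \<gamma> assume h: "\<gamma> \<noteq> 0 \<and> Jdim_eq p (Mcyc p \<sigma> \<gamma>) 2"
    show "\<exists>\<alpha>. \<alpha> \<noteq> 0 \<and> Jspan p {Jnorm p \<sigma> \<alpha>} = Jfixed p \<sigma> (Mcyc p \<sigma> \<gamma>)"
      using final[OF xi_norm] h by blast
  qed
qed

end
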